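(* Let $(S,K,I)$ be an active split graph. If $\Phi(S)$ is connected, then $S$ is indecomposable.
   Context: All graphs are finite and simple. A split graph is a graph $S$ whose vertex set is a disjoint union $V(S)=K\,\dot\cup\,I$ with $K$ a clique and $I$ an independent set; $(K,I)$ is called a bipartition of $S$, and $(S,K,I)$ denotes $S$ together with this fixed bipartition. A 2-switch in a graph $G$ is performed on four distinct vertices $a,b,c,d$ with $ab,cd\in E(G)$ and $ac,bd\notin E(G)$: it deletes $ab,cd$ and adds $ac,bd$; $a,b,c,d$ are said to participate in it. A vertex is active in $G$ if it participates in some 2-switch on $G$, otherwise inactive; $act(G)$ is the set of active vertices, and $G$ is active if $act(G)=V(G)$. For a split graph $(S,K,I)$ and distinct $u,v\in I$, $\sigma_{uv}(S)$ is the number of induced subgraphs of $S$ isomorphic to $P_4$ containing both $u$ and $v$. The factor graph $\Phi(S)$ is the loopless multigraph with vertex set $I$ having exactly $\sigma_{uv}(S)$ parallel edges between $u$ and $v$. Graph notions (connected, complete, clique, etc.) applied to $\Phi(S)$ refer to its underlying simple graph, in which $u\sim v$ iff $\sigma_{uv}(S)\ge1$. Tyshkevich composition: for a split graph $(S,K,I)$ and a graph $G$ vertex-disjoint from $S$, $S\circ G$ is the graph with vertex set $V(S)\cup V(G)$ and edge set $E(S)\cup E(G)\cup\{xy: x\in K,\ y\in V(G)\}$. A graph $G$ is decomposable if $G=S\circ H$ for some split graph $S$ and graph $H$, each with at least one vertex; otherwise $G$ is indecomposable. *)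

theory Defs
  imports Main
begin

definition graph :: "'a set \<Rightarrow> 'a set set \<Rightarrow> bool" where
  "graph V E \<longleftrightarrow> finite V \<and> (\<forall>e\<in>E. e \<subseteq> V \<and> card e = 2)"

definition split_graph :: "'a set \<Rightarrow> 'a set set \<Rightarrow> 'a set \<Rightarrow> 'a set \<Rightarrow> bool" where
  "split_graph V E K I \<longleftrightarrow> graph V E \<and> K \<inter> I = {} \<and> K \<union> I = V \<and>
     (\<forall>x\<in>K. \<forall>y\<in>K. x \<noteq> y \<longrightarrow> {x, y} \<in> E) \<and>
     (\<forall>x\<in>I. \<forall>y\<in>I. {x, y} \<notin> E)"

text \<open>A 2-switch can be performed on a,b,c,d (deleting ab, cd and adding ac, bd).\<close>
definition two_switch :: "'a set \<Rightarrow> 'a set set \<Rightarrow> 'a \<Rightarrow> 'a \<Rightarrow> 'a \<Rightarrow> 'a \<Rightarrow> bool" where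
  "two_switch V E a b c d \<longleftrightarrow> a \<in> V \<and> b \<in> V \<and> c \<in> V \<and> d \<in> V \<and>
     distinct [a, b, c, d] \<and> {a, b} \<in> E \<and> {c, d} \<in> E \<and> {a, c} \<notin> E \<and> {b, d} \<notin> E"

definition act :: "'a set \<Rightarrow> 'a set set \<Rightarrow> 'a set" where
  "act V E = {v \<in> V. \<exists>a b c d. two_switch V E a b c d \<and> v \<in> {a, b, c, d}}"

definition active :: "'a set \<Rightarrow> 'a set set \<Rightarrow> bool" where
  "active V E \<longleftrightarrow> act V E = V"

definition induced_P4 :: "'a set set \<Rightarrow> 'a set \<Rightarrow> bool" where
  "induced_P4 E X \<longleftrightarrow> (\<exists>a b c d. distinct [a, b, c, d] \<and> X = {a, b, c, d} \<and>
     E \<inter> Pow X = {{a, b}, {b, c}, {c, d}})"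

definition sigma :: "'a set \<Rightarrow> 'a set set \<Rightarrow> 'a \<Rightarrow> 'a \<Rightarrow> nat" where
  "sigma V E u v = card {X. X \<subseteq> V \<and> u \<in> X \<and> v \<in> X \<and> induced_P4 E X}"

text \<open>Adjacency in the underlying simple graph of the factor graph Phi(S) (vertex set I).\<close>
definition factor_adj :: "'a set \<Rightarrow> 'a set set \<Rightarrow> 'a set \<Rightarrow> 'a \<Rightarrow> 'a \<Rightarrow> bool" where
  "factor_adj V E I u v \<longleftrightarrow> u \<in> I \<and> v \<in> I \<and> u \<noteq> v \<and> sigma V E u v \<ge> 1"

definition factor_connected :: "'a set \<Rightarrow> 'a set set \<Rightarrow> 'a set \<Rightarrow> bool" where
  "factor_connected V E I \<longleftrightarrow> (\<forall>u\<in>I. \<forall>v\<in>I. (factor_adj V E I)\<^sup>*\<^sup>* u v)"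

definition tysh_vertices :: "'a set \<Rightarrow> 'a set \<Rightarrow> 'a set" where
  "tysh_vertices VS VH = VS \<union> VH"

definition tysh_edges :: "'a set set \<Rightarrow> 'a set \<Rightarrow> 'a set set \<Rightarrow> 'a set \<Rightarrow> 'a set set" where
  "tysh_edges ES K EH VH = ES \<union> EH \<union> {{x, y} | x y. x \<in> K \<and> y \<in> VH}"

definition decomposable :: "'a set \<Rightarrow> 'a set set \<Rightarrow> bool" where
  "decomposable V E \<longleftrightarrow> (\<exists>VS ES K I VH EH.
     split_graph VS ES K I \<and> graph VH EH \<and> VS \<inter> VH = {} \<and> VS \<noteq> {} \<and> VH \<noteq> {} \<and>
     V = tysh_vertices VS VH \<and> E = tysh_edges ES K EH VH)"

end

theory Submission
  imports Defs
begin

locale tyd =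
  fixes VS ES K I VH EH
  assumes sg: "split_graph VS ES K I" and gh: "graph VH EH" and dj: "VS \<inter> VH = {}"
begin

lemma ES_sub: "e \<in> ES \<Longrightarrow> e \<subseteq> VS"
  using sg unfolding split_graph_def graph_def by auto

lemma EH_sub: "e \<in> EH \<Longrightarrow> e \<subseteq> VH"
  using gh unfolding graph_def by auto

lemma KVS: "K \<subseteq> VS" and IVS: "I \<subseteq> VS"
  using sg unfolding split_graph_def by auto

lemma cross: "x \<in> VS \<Longrightarrow> y \<in> VH \<Longrightarrow> ({x,y} \<in> tysh_edges ES K EH VH \<longleftrightarrow> x \<in> K)"
proof
  assume x: "x \<in> VS" and y: "y \<in> VH" and e: "{x,y} \<in> tysh_edges ES K EH VH"
  show "x \<in> K"
  proof -
    have "{x,y} \<notin> ES" using ES_sub y x dj by blast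
    moreover have "{x,y} \<notin> EH" using EH_sub y x dj by blast
    ultimately obtain k h where "{x,y} = {k,h}" "k \<in> K" "h \<in> VH"
      using e unfolding tysh_edges_def by blast
    then show ?thesis using x dj KVS by (auto simp: doubleton_eq_iff)
  qed
next
  assume "x \<in> VS" "y \<in> VH" "x \<in> K"
  then show "{x,y} \<in> tysh_edges ES K EH VH" unfolding tysh_edges_def by blast
qed

lemma cross': "x \<in> VS \<Longrightarrow> y \<in> VH \<Longrightarrow> ({y,x} \<in> tysh_edges ES K EH VH \<longleftrightarrow> x \<in> K)"
  using cross by (simp add: insert_commute)

lemma KK: "x \<in> K \<Longrightarrow> y \<in> K \<Longrightarrow> x \<noteq> y \<Longrightarrow> {x,y} \<in> tysh_edges ES K EH VH"
  using sg unfolding split_graph_def tysh_edges_def by blast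

lemma II: "x \<in> I \<Longrightarrow> y \<in> I \<Longrightarrow> {x,y} \<notin> tysh_edges ES K EH VH"
proof
  assume x: "x \<in> I" and y: "y \<in> I" and e: "{x,y} \<in> tysh_edges ES K EH VH"
  have "{x,y} \<notin> ES" using sg x y unfolding split_graph_def by blast
  moreover have "{x,y} \<notin> EH" using EH_sub x IVS dj by blast
  ultimately obtain k h where "{x,y} = {k,h}" "k \<in> K" "h \<in> VH"
    using e unfolding tysh_edges_def by blast
  then show False using x y dj IVS by (auto simp: doubleton_eq_iff)
qed

lemma KI: "x \<in> VS \<Longrightarrow> x \<notin> K \<Longrightarrow> x \<in> I"
  using sg unfolding split_graph_def by auto

lemma core:
  assumes V: "V = VS \<union> VH" and E: "E = tysh_edges ES K EH VH"
    and ts: "two_switch V E a b c d" and a: "a \<in> VH"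
  shows "b \<in> VH \<and> c \<in> VH \<and> d \<in> VH"
proof -
  have abcd: "a \<in> V" "b \<in> V" "c \<in> V" "d \<in> V" "distinct [a,b,c,d]"
    and ab: "{a,b} \<in> E" and cd: "{c,d} \<in> E" and ac: "{a,c} \<notin> E" and bd: "{b,d} \<notin> E"
    using ts unfolding two_switch_def by auto
  have b: "b \<in> VH"
  proof (rule ccontr)
    assume nb: "b \<notin> VH"
    hence bS: "b \<in> VS" using abcd V by auto
    have bK: "b \<in> K" using cross'[OF bS a] ab E by simp
    have d: "d \<in> VS" using bd cross[OF bS] bK E abcd V by auto
    have dK: "d \<notin> K" using bd KK bK abcd E by auto
    have dI: "d \<in> I" using KI d dK by auto
    have c: "c \<notin> VH" using cd cross'[OF d] dK E by auto
    hence cS: "c \<in> VS" using abcd V by auto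
    have cK: "c \<notin> K" using ac cross'[OF cS a] E by auto
    have cI: "c \<in> I" using KI cS cK by auto
    show False using II[OF cI dI] cd E by simp
  qed
  have c: "c \<in> VH"
  proof (rule ccontr)
    assume "c \<notin> VH"
    hence cS: "c \<in> VS" using abcd V by auto
    have cK: "c \<notin> K" using ac cross'[OF cS a] E by auto
    have cI: "c \<in> I" using KI cS cK by auto
    have d: "d \<in> VS" using cd cross[OF cS] cK E abcd V by auto
    have dK: "d \<in> K" using cd E II[OF cI] KI[OF d] by auto
    show False using bd cross'[OF d b] dK E by (simp add: insert_commute)
  qed
  have d: "d \<in> VH"
  proof (rule ccontr)
    assume "d \<notin> VH"
    hence dS: "d \<in> VS" using abcd V by auto
    have "d \<in> K" using cd cross[OF dS c] E by (simp add: insert_commute)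
    then show False using bd cross'[OF dS b] E by simp
  qed
  show ?thesis using b c d by auto
qed

lemma ts_sym:
  assumes "two_switch V E a b c d"
  shows "two_switch V E c d a b" "two_switch V E b a d c" "two_switch V E d c b a"
  using assms unfolding two_switch_def by (auto simp: insert_commute)

lemma allH:
  assumes V: "V = VS \<union> VH" and E: "E = tysh_edges ES K EH VH"
    and ts: "two_switch V E a b c d" and x: "x \<in> {a,b,c,d}" "x \<in> VH"
  shows "{a,b,c,d} \<subseteq> VH"
proof -
  have "x = a \<or> x = b \<or> x = c \<or> x = d" using x(1) by simp
  moreover have "a \<in> VH \<Longrightarrow> ?thesis" using core[OF V E ts] by simp
  moreover have "b \<in> VH \<Longrightarrow> ?thesis" using core[OF V E ts_sym(2)[OF ts]] by simp
  moreover have "c \<in> VH \<Longrightarrow> ?thesis" using core[OF V E ts_sym(1)[OF ts]] by simp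
  moreover have "d \<in> VH \<Longrightarrow> ?thesis" using core[OF V E ts_sym(3)[OF ts]] by simp
  ultimately show ?thesis using x(2) by blast
qed

end

theorem theorem2p6:
  fixes V :: "'a set" and E :: "'a set set" and K I :: "'a set"
  assumes "split_graph V E K I"
    and "active V E"
    and "factor_connected V E I"
  shows "\<not> decomposable V E"
proof
  assume "decomposable V E"
  then obtain VS ES K' I' VH EH where sg: "split_graph VS ES K' I'" and gh: "graph VH EH"
    and dj: "VS \<inter> VH = {}" and ne: "VS \<noteq> {}" "VH \<noteq> {}"
    and V: "V = VS \<union> VH" and E: "E = tysh_edges ES K' EH VH"
    unfolding decomposable_def tysh_vertices_def by blast
  interpret tyd VS ES K' I' VH EH using sg gh dj by unfold_locales
  have Kcl: "\<And>x y. x \<in> K \<Longrightarrow> y \<in> K \<Longrightarrow> x \<noteq> y \<Longrightarrow> {x,y} \<in> E"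
    using assms(1) unfolding split_graph_def by blast
  have KIV: "\<And>x. x \<in> V \<Longrightarrow> x \<notin> K \<Longrightarrow> x \<in> I"
    using assms(1) unfolding split_graph_def by blast
  have getI: "\<exists>z\<in>{a,b,c,d}. z \<in> I" if "two_switch V E a b c d" for a b c d
  proof -
    have "a \<in> V" "c \<in> V" "a \<noteq> c" "{a,c} \<notin> E" using that unfolding two_switch_def by auto
    then have "a \<notin> K \<or> c \<notin> K" using Kcl by blast
    then show ?thesis using KIV \<open>a \<in> V\<close> \<open>c \<in> V\<close> by blast
  qed
  obtain h where h: "h \<in> VH" using ne by auto
  hence "h \<in> act V E" using assms(2) V unfolding active_def by auto
  then obtain a b c d where ts1: "two_switch V E a b c d" "h \<in> {a,b,c,d}"
    unfolding act_def by blast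
  have s1: "{a,b,c,d} \<subseteq> VH" using allH[OF V E ts1(1) ts1(2) h] .
  obtain u where u: "u \<in> I" "u \<in> VH" using getI[OF ts1(1)] s1 by blast
  obtain s where s: "s \<in> VS" using ne by auto
  hence "s \<in> act V E" using assms(2) V unfolding active_def by auto
  then obtain a' b' c' d' where ts2: "two_switch V E a' b' c' d'" "s \<in> {a',b',c',d'}"
    unfolding act_def by blast
  have s2: "{a',b',c',d'} \<subseteq> VS"
  proof (rule ccontr)
    assume "\<not> ?thesis"
    then obtain x where "x \<in> {a',b',c',d'}" "x \<in> VH"
      using ts2 V unfolding two_switch_def by auto
    then have "{a',b',c',d'} \<subseteq> VH" using allH[OF V E ts2(1)] by blast
    then show False using ts2(2) s dj by blast
  qed
  obtain v where v: "v \<in> I" "v \<in> VS" using getI[OF ts2(1)] s2 by blast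
  have path: "(factor_adj V E I)\<^sup>*\<^sup>* u v" using assms(3) u v unfolding factor_connected_def by blast
  have "w \<in> VH" if "(factor_adj V E I)\<^sup>*\<^sup>* u w" for w
    using that
  proof (induction rule: rtranclp_induct)
    case base
    then show ?case using u by simp
  next
    case (step y z)
    have "sigma V E y z \<ge> 1" using step(2) unfolding factor_adj_def by blast
    then have "{X. X \<subseteq> V \<and> y \<in> X \<and> z \<in> X \<and> induced_P4 E X} \<noteq> {}"
      unfolding sigma_def by (metis card.empty not_one_le_zero)
    then obtain X where X: "X \<subseteq> V" "y \<in> X" "z \<in> X" "induced_P4 E X" by blast
    then obtain p q r t where pq: "distinct [p,q,r,t]" "X = {p,q,r,t}"
      "E \<inter> Pow X = {{p,q},{q,r},{r,t}}" unfolding induced_P4_def by blast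
    have inE: "\<And>e. e \<subseteq> X \<Longrightarrow> e \<in> E \<longleftrightarrow> e \<in> {{p,q},{q,r},{r,t}}"
      using pq(3) by blast
    have pV: "p \<in> V" "q \<in> V" "r \<in> V" "t \<in> V" using X(1) pq(2) by auto
    have pqE: "{p,q} \<subseteq> X" "{r,t} \<subseteq> X" "{p,r} \<subseteq> X" "{q,t} \<subseteq> X" using pq(2) by auto
    have e1: "{p,q} \<in> E" "{r,t} \<in> E" using inE[OF pqE(1)] inE[OF pqE(2)] by simp_all
    have e2: "{p,r} \<notin> E" "{q,t} \<notin> E" using inE[OF pqE(3)] inE[OF pqE(4)] pq(1)
      by (auto simp: doubleton_eq_iff)
    have ts: "two_switch V E p q r t"
      unfolding two_switch_def using pV e1 e2 pq(1) by blast
    have yX: "y \<in> {p,q,r,t}" using X(2) pq(2) by simp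
    have "{p,q,r,t} \<subseteq> VH" using allH[OF V E ts yX step(3)] .
    then show ?case using X(3) pq(2) by blast
  qed
  then have "v \<in> VH" using path by blast
  then show False using v dj by blast
qed

end
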